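(* Let $G$ be a finite simple connected graph on $n$ vertices and $m$ a positive integer such that for every set $S$ of at most $m$ vertices, the graph $G-\overline N(S)$ has a connected component with more than $n/2$ vertices. Then $c_{\infty}(G)>m$.
   Context: $N(S)$ is the set of vertices with a neighbour in $S$, $\overline N(S)=S\cup N(S)$, and $G-A$ is the subgraph induced by $V(G)\setminus A$. Cops and Robber with an infinitely fast robber: the game is played on a graph $G$. A set of cops first choose initial vertices (several cops may share a vertex); then the robber, knowing their positions, chooses a vertex. Then the players move in alternating rounds, cops first. In the cops' turn each cop either stays or moves to an adjacent vertex; in the robber's turn she either stays or moves along any path of $G$ starting at her current vertex that contains no vertex currently occupied by a cop. The cops win if at some point a cop moves to the vertex occupied by the robber. $c_{\infty}(G)$ is the minimum number of cops for which the cops have a strategy that guarantees a win. *)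

theory Defs
  imports Main
begin

definition simple_graph :: "'a set \<Rightarrow> ('a \<Rightarrow> 'a \<Rightarrow> bool) \<Rightarrow> bool" where
  "simple_graph V E \<longleftrightarrow> finite V \<and> (\<forall>u v. E u v \<longrightarrow> u \<in> V \<and> v \<in> V)
     \<and> (\<forall>u v. E u v \<longrightarrow> E v u) \<and> (\<forall>v. \<not> E v v)"

definition induced :: "'a set \<Rightarrow> ('a \<Rightarrow> 'a \<Rightarrow> bool) \<Rightarrow> 'a \<Rightarrow> 'a \<Rightarrow> bool" where
  "induced W E x y \<longleftrightarrow> E x y \<and> x \<in> W \<and> y \<in> W"

definition connected_graph :: "'a set \<Rightarrow> ('a \<Rightarrow> 'a \<Rightarrow> bool) \<Rightarrow> bool" where
  "connected_graph V E \<longleftrightarrow> (\<forall>u\<in>V. \<forall>v\<in>V. (induced V E)\<^sup>*\<^sup>* u v)"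

definition nbhd :: "('a \<Rightarrow> 'a \<Rightarrow> bool) \<Rightarrow> 'a set \<Rightarrow> 'a set" where
  "nbhd E S = {v. \<exists>u\<in>S. E u v}"

definition closed_nbhd :: "('a \<Rightarrow> 'a \<Rightarrow> bool) \<Rightarrow> 'a set \<Rightarrow> 'a set" where
  "closed_nbhd E S = S \<union> nbhd E S"

definition component_del :: "'a set \<Rightarrow> ('a \<Rightarrow> 'a \<Rightarrow> bool) \<Rightarrow> 'a set \<Rightarrow> 'a \<Rightarrow> 'a set" where
  "component_del V E A v = {w \<in> V - A. (induced (V - A) E)\<^sup>*\<^sup>* v w}"

text \<open>Cops and Robber with an infinitely fast robber.
  A position (cs, r) is the situation just before the cops' turn: cs is the list of
  cop positions (one entry per cop, repetitions allowed), r the robber's vertex.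
  The cops move (each cop stays or moves to a neighbour); they win if some cop is
  now on r; otherwise the robber moves to any vertex reachable from r by a path
  in G avoiding all vertices occupied by cops.  cops_win V E cs r holds iff the
  cops can force a capture from (cs, r) (least fixed point = win in finitely many
  rounds against every robber behaviour).\<close>

definition robber_reach :: "'a set \<Rightarrow> ('a \<Rightarrow> 'a \<Rightarrow> bool) \<Rightarrow> 'a set \<Rightarrow> 'a \<Rightarrow> 'a \<Rightarrow> bool" where
  "robber_reach V E C r r' \<longleftrightarrow> (induced (V - C) E)\<^sup>*\<^sup>* r r'"

definition cop_step :: "('a \<Rightarrow> 'a \<Rightarrow> bool) \<Rightarrow> 'a list \<Rightarrow> 'a list \<Rightarrow> bool" where
  "cop_step E cs cs' \<longleftrightarrow> list_all2 (\<lambda>c c'. c' = c \<or> E c c') cs cs'"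

inductive cops_win :: "'a set \<Rightarrow> ('a \<Rightarrow> 'a \<Rightarrow> bool) \<Rightarrow> 'a list \<Rightarrow> 'a \<Rightarrow> bool"
  for V E where
  win: "cop_step E cs cs' \<Longrightarrow>
        (r \<in> set cs' \<or> (\<forall>r'. robber_reach V E (set cs') r r' \<longrightarrow> cops_win V E cs' r'))
        \<Longrightarrow> cops_win V E cs r"

definition k_cops_win :: "'a set \<Rightarrow> ('a \<Rightarrow> 'a \<Rightarrow> bool) \<Rightarrow> nat \<Rightarrow> bool" where
  "k_cops_win V E k \<longleftrightarrow> (\<exists>cs. length cs = k \<and> set cs \<subseteq> V \<and> (\<forall>r\<in>V. cops_win V E cs r))"

definition c_inf :: "'a set \<Rightarrow> ('a \<Rightarrow> 'a \<Rightarrow> bool) \<Rightarrow> nat" where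
  "c_inf V E = (LEAST k. k_cops_win V E k)"

end

theory Submission
  imports Defs
begin

lemma ind_sym:
  assumes "\<forall>u v. E u v \<longrightarrow> E v u" "(induced W E)\<^sup>*\<^sup>* a b"
  shows "(induced W E)\<^sup>*\<^sup>* b a"
  using assms(2)
proof (induction rule: rtranclp_induct)
  case base then show ?case by simp
next
  case (step y z)
  have "induced W E z y" using step(2) assms(1) by (auto simp: induced_def)
  then show ?case using step(3) by (meson converse_rtranclp_into_rtranclp)
qed

lemma comp_eq:
  assumes "\<forall>u v. E u v \<longrightarrow> E v u" "w \<in> component_del V E A v"
  shows "component_del V E A w = component_del V E A v"
proof -
  have vw: "(induced (V - A) E)\<^sup>*\<^sup>* v w" using assms(2) by (simp add: component_del_def)
  have wv: "(induced (V - A) E)\<^sup>*\<^sup>* w v" using ind_sym[OF assms(1) vw] .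
  show ?thesis unfolding component_del_def
    using vw wv by (auto intro: rtranclp_trans)
qed

lemma ind_mono:
  assumes "(induced W E)\<^sup>*\<^sup>* a b" "W \<subseteq> W'"
  shows "(induced W' E)\<^sup>*\<^sup>* a b"
  using assms(1)
proof (induction rule: rtranclp_induct)
  case base then show ?case by simp
next
  case (step y z)
  then show ?case using assms(2) by (auto simp: induced_def intro: rtranclp.rtrancl_into_rtrancl)
qed

lemma cop_step_sub:
  assumes "cop_step E cs cs'"
  shows "set cs' \<subseteq> closed_nbhd E (set cs)"
proof
  fix x assume "x \<in> set cs'"
  then obtain i where i: "i < length cs'" "cs' ! i = x" by (metis in_set_conv_nth)
  have len: "length cs = length cs'" using assms by (simp add: cop_step_def list_all2_lengthD)
  have "cs' ! i = cs ! i \<or> E (cs ! i) (cs' ! i)"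
    using assms i len by (auto simp: cop_step_def list_all2_conv_all_nth)
  moreover have "cs ! i \<in> set cs" using i len by simp
  ultimately show "x \<in> closed_nbhd E (set cs)"
    using i by (auto simp: closed_nbhd_def nbhd_def)
qed

lemma cop_step_len: "cop_step E cs cs' \<Longrightarrow> length cs' = length cs"
  by (simp add: cop_step_def list_all2_lengthD)

lemma robber_escapes:
  assumes sg: "simple_graph V E"
    and H: "\<forall>S. S \<subseteq> V \<and> card S \<le> m \<longrightarrow>
           (\<exists>v \<in> V - closed_nbhd E S.
              2 * card (component_del V E (closed_nbhd E S) v) > card V)"
    and cw: "cops_win V E cs r"
  shows "set cs \<subseteq> V \<Longrightarrow> length cs \<le> m \<Longrightarrow> r \<in> V - closed_nbhd E (set cs) \<Longrightarrow>
     2 * card (component_del V E (closed_nbhd E (set cs)) r) > card V \<Longrightarrow> False"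
  using cw
proof (induction rule: cops_win.induct)
  case (win cs cs' r)
  have fin: "finite V" and sym: "\<forall>u v. E u v \<longrightarrow> E v u" and inV: "\<forall>u v. E u v \<longrightarrow> u \<in> V \<and> v \<in> V"
    using sg by (auto simp: simple_graph_def)
  have sub: "set cs' \<subseteq> closed_nbhd E (set cs)" using cop_step_sub[OF win(1)] .
  have notin: "r \<notin> set cs'" using sub win(5) by auto
  have csV: "set cs' \<subseteq> V"
  proof
    fix x assume "x \<in> set cs'"
    then have "x \<in> closed_nbhd E (set cs)" using sub by auto
    then show "x \<in> V" using win(3) inV by (auto simp: closed_nbhd_def nbhd_def)
  qed
  have len: "length cs' \<le> m" using cop_step_len[OF win(1)] win(4) by simp
  have cardS: "card (set cs') \<le> m" using len card_length le_trans by blast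
  obtain v where v: "v \<in> V - closed_nbhd E (set cs')"
    "2 * card (component_del V E (closed_nbhd E (set cs')) v) > card V"
    using H csV cardS by blast
  define C where "C = component_del V E (closed_nbhd E (set cs)) r"
  define C' where "C' = component_del V E (closed_nbhd E (set cs')) v"
  have CV: "C \<subseteq> V" "C' \<subseteq> V" by (auto simp: C_def C'_def component_del_def)
  have fC: "finite C" "finite C'" using CV fin finite_subset by auto
  have "card (C \<union> C') \<le> card V" using CV fin by (simp add: card_mono)
  moreover have "card (C \<union> C') + card (C \<inter> C') = card C + card C'"
    using fC card_Un_Int by metis
  ultimately have "C \<inter> C' \<noteq> {}" using win(6) v(2) unfolding C_def C'_def by auto
  then obtain w where w: "w \<in> C" "w \<in> C'" by blast
  have path: "(induced (V - closed_nbhd E (set cs)) E)\<^sup>*\<^sup>* r w"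
    using w(1) by (simp add: C_def component_del_def)
  have rr: "robber_reach V E (set cs') r w"
    unfolding robber_reach_def using ind_mono[OF path] sub by blast
  have ceq: "component_del V E (closed_nbhd E (set cs')) w = C'"
    using comp_eq[OF sym] w(2) unfolding C'_def by blast
  have wV: "w \<in> V - closed_nbhd E (set cs')" using w(2) by (simp add: C'_def component_del_def)
  have "cops_win V E cs' w \<and> (set cs' \<subseteq> V \<longrightarrow> length cs' \<le> m \<longrightarrow>
     w \<in> V - closed_nbhd E (set cs') \<longrightarrow>
     2 * card (component_del V E (closed_nbhd E (set cs')) w) > card V \<longrightarrow> False)"
    using win(2) notin rr by blast
  then show False using csV len wV ceq v(2) unfolding C'_def by auto
qed

theorem mainTheorem12:
  fixes V :: "'a set" and E :: "'a \<Rightarrow> 'a \<Rightarrow> bool" and m :: nat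
  assumes "simple_graph V E"
    and "connected_graph V E"
    and "m \<ge> 1"
    and "\<forall>S. S \<subseteq> V \<and> card S \<le> m \<longrightarrow>
           (\<exists>v \<in> V - closed_nbhd E S.
              2 * card (component_del V E (closed_nbhd E S) v) > card V)"
  shows "c_inf V E > m"
proof -
  have fin: "finite V" using assms(1) by (simp add: simple_graph_def)
  obtain xs where xs: "set xs = V" using finite_list[OF fin] by blast
  have ex: "k_cops_win V E (length xs)"
    unfolding k_cops_win_def
  proof (intro exI conjI ballI)
    fix r assume "r \<in> V"
    moreover have "cop_step E xs xs" by (simp add: cop_step_def list.rel_refl)
    ultimately show "cops_win V E xs r" using xs by (auto intro: cops_win.win)
  qed (use xs in auto)
  have no: "\<not> k_cops_win V E k" if "k \<le> m" for k
  proof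
    assume "k_cops_win V E k"
    then obtain cs where cs: "length cs = k" "set cs \<subseteq> V" "\<forall>r\<in>V. cops_win V E cs r"
      by (auto simp: k_cops_win_def)
    have "card (set cs) \<le> m" using cs(1) that card_length le_trans by blast
    then obtain v where v: "v \<in> V - closed_nbhd E (set cs)"
      "2 * card (component_del V E (closed_nbhd E (set cs)) v) > card V"
      using assms(4) cs(2) by blast
    show False using robber_escapes[OF assms(1) assms(4)] cs v that by blast
  qed
  have "k_cops_win V E (c_inf V E)" unfolding c_inf_def using ex by (rule LeastI)
  then show ?thesis using no by (meson not_le)
qed

end
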